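(* Let $n\ge2$, $\nu\in\mathcal{F}_{C_n}$, $1\le k\le n$ and $\alpha$ a formula. Then: (1) if $\nu(\alpha)=T_n$ then $\nu(\alpha^k)=T_n$; (2) if $\nu(\alpha)=t^n_i$ for some $0\le i\le k-2$ then $\nu(\alpha^k)=T_n$; (3) if $\nu(\alpha)=t^n_{k-1}$ then $\nu(\alpha^k)=F_n$; (4) if $\nu(\alpha)=t^n_i$ for some $k\le i\le n-1$ then $\nu(\alpha^k)=t^n_{i-k}$; (5) if $\nu(\alpha)=F_n$ then $\nu(\alpha^k)=T_n$.
   Context: $\Sigma$ has unary $\neg$ and binary $\wedge,\vee,\to$; formulas over a denumerable set of variables; $\alpha^0=\alpha$, $\alpha^{k+1}=\neg(\alpha^k\wedge\neg\alpha^k)$. Fix $n\ge2$. $B_n=\{z\in\{0,1\}^{n+1}:(z_1\wedge\dots\wedge z_k)\vee z_{k+1}=1\text{ for all }1\le k\le n\}$; its elements are $T_n=(1,0,1,\dots,1)$, $t^n_i$ ($0\le i\le n-2$) the tuple with $z_1=z_2=1$ and a single $0$ at coordinate $i+3$, $t^n_{n-1}=(1,\dots,1)$, and $F_n=(0,1,\dots,1)$. $D_n=\{z\in B_n:z_1=1\}$, $Boo_n=\{T_n,F_n\}$, $I_n=B_n\setminus Boo_n$. The multialgebra $\mathcal{A}_{C_n}$ on $B_n$: $\tilde\neg z=\{w\in B_n:w_1=z_2,\ w_2\le z_1\}$; for $\#\in\{\wedge,\vee,\to\}$, $z\tilde\#w=\{u\in Boo_n:u_1=z_1\#w_1\}$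 if $z,w\in Boo_n$, and $\{u\in B_n:u_1=z_1\#w_1\}$ otherwise ($\#$ on $\{0,1\}$ Boolean). A valuation is a map $\nu$ from formulas to $B_n$ with $\nu(\neg\alpha)\in\tilde\neg\nu(\alpha)$ and $\nu(\alpha\#\beta)\in\nu(\alpha)\tilde\#\nu(\beta)$. $\mathcal{F}_{C_n}$ is the set of valuations such that for every $\alpha$: $\nu(\alpha)=t^n_0$ implies $\nu(\alpha\wedge\neg\alpha)=T_n$; and for $1\le k\le n-1$, $\nu(\alpha)=t^n_k$ implies $\nu(\alpha\wedge\neg\alpha)\in I_n$ and $\nu(\alpha^1)=t^n_{k-1}$. *)

theory Defs
  imports Main
begin

datatype fmla = Var nat | Neg fmla | And fmla fmla | Or fmla fmla | Imp fmla fmla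

fun fpow :: "fmla \<Rightarrow> nat \<Rightarrow> fmla" where
  "fpow a 0 = a"
| "fpow a (Suc k) = Neg (And (fpow a k) (Neg (fpow a k)))"

(* Elements of {0,1}^(n+1) are bool lists of length n+1; coordinate z_j is z ! (j-1). *)
definition Bn :: "nat \<Rightarrow> bool list set" where
  "Bn n = {z. length z = n + 1 \<and>
              (\<forall>k. 1 \<le> k \<and> k \<le> n \<longrightarrow> (\<forall>j<k. z ! j) \<or> z ! k)}"

definition Tn :: "nat \<Rightarrow> bool list" where
  "Tn n = True # False # replicate (n - 1) True"

definition Fn :: "nat \<Rightarrow> bool list" where
  "Fn n = False # replicate n True"

(* t^n_i: for i \<le> n-2, z_1 = z_2 = 1 and a single 0 at coordinate i+3 (index i+2);
   t^n_{n-1} is the all-ones tuple *)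
definition tn :: "nat \<Rightarrow> nat \<Rightarrow> bool list" where
  "tn n i = (if i \<le> n - 2 then (replicate (n + 1) True)[i + 2 := False]
             else replicate (n + 1) True)"

definition Dn :: "nat \<Rightarrow> bool list set" where
  "Dn n = {z \<in> Bn n. z ! 0}"

definition Boo :: "nat \<Rightarrow> bool list set" where
  "Boo n = {Tn n, Fn n}"

definition In :: "nat \<Rightarrow> bool list set" where
  "In n = Bn n - Boo n"

definition negM :: "nat \<Rightarrow> bool list \<Rightarrow> bool list set" where
  "negM n z = {w \<in> Bn n. w ! 0 = z ! 1 \<and> (w ! 1 \<longrightarrow> z ! 0)}"

definition binM :: "nat \<Rightarrow> (bool \<Rightarrow> bool \<Rightarrow> bool) \<Rightarrow> bool list \<Rightarrow> bool list \<Rightarrow> bool list set" where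
  "binM n f z w = (if z \<in> Boo n \<and> w \<in> Boo n
                   then {u \<in> Boo n. u ! 0 = f (z ! 0) (w ! 0)}
                   else {u \<in> Bn n. u ! 0 = f (z ! 0) (w ! 0)})"

definition valuation :: "nat \<Rightarrow> (fmla \<Rightarrow> bool list) \<Rightarrow> bool" where
  "valuation n v \<longleftrightarrow>
     (\<forall>a. v a \<in> Bn n) \<and>
     (\<forall>a. v (Neg a) \<in> negM n (v a)) \<and>
     (\<forall>a b. v (And a b) \<in> binM n (\<and>) (v a) (v b)) \<and>
     (\<forall>a b. v (Or a b) \<in> binM n (\<or>) (v a) (v b)) \<and>
     (\<forall>a b. v (Imp a b) \<in> binM n (\<longrightarrow>) (v a) (v b))"

definition FC :: "nat \<Rightarrow> (fmla \<Rightarrow> bool list) set" where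
  "FC n = {v. valuation n v \<and>
     (\<forall>a. (v a = tn n 0 \<longrightarrow> v (And a (Neg a)) = Tn n) \<and>
          (\<forall>k. 1 \<le> k \<and> k \<le> n - 1 \<longrightarrow> v a = tn n k \<longrightarrow>
               v (And a (Neg a)) \<in> In n \<and> v (fpow a 1) = tn n (k - 1)))}"

end

theory Submission
  imports Defs
begin

lemma Tn0[simp]: "Tn n ! 0 = True" and Tn1[simp]: "Tn n ! Suc 0 = False"
  and Fn0[simp]: "Fn n ! 0 = False" and Fn1[simp]: "n \<ge> 1 \<Longrightarrow> Fn n ! Suc 0 = True"
  by (auto simp: Tn_def Fn_def)

lemma Tn_ne_Fn[simp]: "Tn n \<noteq> Fn n" "Fn n \<noteq> Tn n"
  using Tn0 Fn0 by metis+

lemma len_Tn: "n \<ge> 1 \<Longrightarrow> length (Tn n) = n + 1" and len_Fn: "length (Fn n) = n + 1"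
  by (auto simp: Tn_def Fn_def)

lemma Bn_F: assumes "w \<in> Bn n" "\<not> w ! 0" shows "w = Fn n"
proof (rule nth_equalityI)
  show "length w = length (Fn n)" using assms by (simp add: Bn_def len_Fn)
  fix j assume j: "j < length w"
  show "w ! j = Fn n ! j"
  proof (cases j)
    case 0 then show ?thesis using assms by simp
  next
    case (Suc m)
    have "(\<forall>j'<j. w ! j') \<or> w ! j" using assms j Suc by (auto simp: Bn_def)
    hence "w ! j" using assms Suc by auto
    moreover have "Fn n ! j" using Suc j assms by (auto simp: Fn_def Bn_def)
    ultimately show ?thesis by simp
  qed
qed

lemma Bn_T: assumes "n \<ge> 1" "w \<in> Bn n" "w ! 0" "\<not> w ! 1" shows "w = Tn n"
proof (rule nth_equalityI)
  show "length w = length (Tn n)" using assms by (simp add: Bn_def len_Tn)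
  fix j assume j: "j < length w"
  show "w ! j = Tn n ! j"
  proof (cases j)
    case 0 then show ?thesis using assms by simp
  next
    case (Suc m)
    show ?thesis
    proof (cases m)
      case 0 then show ?thesis using Suc assms by simp
    next
      case (Suc p)
      have "(\<forall>j'<j. w ! j') \<or> w ! j" using assms j \<open>j = Suc m\<close> by (auto simp: Bn_def)
      hence "w ! j" using assms \<open>j = Suc m\<close> Suc by auto
      moreover have "Tn n ! j" using Suc \<open>j = Suc m\<close> j assms by (auto simp: Tn_def Bn_def)
      ultimately show ?thesis by simp
    qed
  qed
qed

lemma fpow1: "fpow b 1 = Neg (And b (Neg b))" by simp

lemma fpow_add: "fpow a (m + j) = fpow (fpow a j) m"
  by (induction m) auto

lemma FCD: assumes "v \<in> FC n" shows "valuation n v"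
  "\<And>a. v a = tn n 0 \<Longrightarrow> v (And a (Neg a)) = Tn n"
  "\<And>a k. 1 \<le> k \<Longrightarrow> k \<le> n - 1 \<Longrightarrow> v a = tn n k \<Longrightarrow> v (fpow a 1) = tn n (k - 1)"
  using assms by (auto simp: FC_def)

lemma negT: assumes "valuation n v" "v b = Tn n" shows "v (Neg b) = Fn n"
proof -
  have "v (Neg b) \<in> negM n (v b)" using assms unfolding valuation_def by metis
  then show ?thesis using assms Bn_F by (auto simp: negM_def)
qed

lemma negF: assumes "valuation n v" "v b = Fn n" "n \<ge> 1" shows "v (Neg b) = Tn n"
proof -
  have "v (Neg b) \<in> negM n (v b)" using assms unfolding valuation_def by metis
  then show ?thesis using assms Bn_T by (auto simp: negM_def)
qed

lemma andTF: assumes "valuation n v" "v b = Tn n" "v c = Fn n" shows "v (And b c) = Fn n"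
proof -
  have "v (And b c) \<in> binM n (\<and>) (v b) (v c)" using assms unfolding valuation_def by metis
  then show ?thesis using assms by (auto simp: binM_def Boo_def)
qed

lemma andFT: assumes "valuation n v" "v b = Fn n" "v c = Tn n" shows "v (And b c) = Fn n"
proof -
  have "v (And b c) \<in> binM n (\<and>) (v b) (v c)" using assms unfolding valuation_def by metis
  then show ?thesis using assms by (auto simp: binM_def Boo_def)
qed

lemma stepT: assumes "valuation n v" "n \<ge> 1" "v b = Tn n" shows "v (fpow b 1) = Tn n"
proof -
  have "v (Neg b) = Fn n" using negT assms by blast
  hence "v (And b (Neg b)) = Fn n" using andTF assms by blast
  hence "v (Neg (And b (Neg b))) = Tn n" using negF assms by blast
  thus ?thesis by (simp only: fpow1)
qed

lemma stepF: assumes "valuation n v" "n \<ge> 1" "v b = Fn n" shows "v (fpow b 1) = Tn n"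
proof -
  have "v (Neg b) = Tn n" using negF assms by blast
  hence "v (And b (Neg b)) = Fn n" using andFT assms by blast
  hence "v (Neg (And b (Neg b))) = Tn n" using negF assms by blast
  thus ?thesis by (simp only: fpow1)
qed

lemma step0: assumes "v \<in> FC n" "v b = tn n 0" shows "v (fpow b 1) = Fn n"
proof -
  have "v (And b (Neg b)) = Tn n" using FCD assms by blast
  hence "v (Neg (And b (Neg b))) = Fn n" using negT FCD(1)[OF assms(1)] by blast
  thus ?thesis by (simp only: fpow1)
qed

lemma allT: assumes "valuation n v" "n \<ge> 1" "v a = Tn n" shows "v (fpow a m) = Tn n"
proof (induction m)
  case 0 then show ?case using assms by simp
next
  case (Suc m)
  have "fpow a (Suc m) = fpow (fpow a m) 1" using fpow_add[of a 1 m] by simp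
  then show ?case using stepT[OF assms(1,2) Suc] by simp
qed

lemma shiftT: assumes "valuation n v" "n \<ge> 1" "v (fpow a j) = Tn n" "j \<le> m"
  shows "v (fpow a m) = Tn n"
proof -
  have "fpow a m = fpow (fpow a j) (m - j)" using fpow_add[of a "m - j" j] assms by simp
  then show ?thesis using allT[OF assms(1,2,3)] by simp
qed

lemma down: assumes "v \<in> FC n" "i \<le> n - 1" "v a = tn n i" "j \<le> i"
  shows "v (fpow a j) = tn n (i - j)"
  using assms(4)
proof (induction j)
  case 0 then show ?case using assms by simp
next
  case (Suc j)
  have e: "fpow a (Suc j) = fpow (fpow a j) 1" using fpow_add[of a 1 j] by simp
  have j: "j \<le> i" "1 \<le> i - j" "i - j \<le> n - 1" using Suc.prems assms(2) by linarith+
  have "v (fpow a j) = tn n (i - j)" using Suc.IH j(1) by blast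
  hence "v (fpow (fpow a j) 1) = tn n (i - j - 1)"
    using FCD(3)[OF assms(1), of "i - j" "fpow a j"] j by blast
  moreover have "i - j - 1 = i - Suc j" by simp
  ultimately show ?case using e by metis
qed

theorem mainTheorem10:
  fixes n k :: nat and v :: "fmla \<Rightarrow> bool list" and a :: fmla
  assumes "n \<ge> 2" and "v \<in> FC n" and "1 \<le> k" and "k \<le> n"
  shows "(v a = Tn n \<longrightarrow> v (fpow a k) = Tn n) \<and>
         (\<forall>i. i + 2 \<le> k \<and> v a = tn n i \<longrightarrow> v (fpow a k) = Tn n) \<and>
         (v a = tn n (k - 1) \<longrightarrow> v (fpow a k) = Fn n) \<and>
         (\<forall>i. k \<le> i \<and> i \<le> n - 1 \<and> v a = tn n i \<longrightarrow> v (fpow a k) = tn n (i - k)) \<and>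
         (v a = Fn n \<longrightarrow> v (fpow a k) = Tn n)"
proof -
  have val: "valuation n v" and n1: "n \<ge> 1" using assms FCD by auto
  have F1: "v (fpow a (Suc i)) = Fn n" if "i \<le> n - 1" "v a = tn n i" for i
  proof -
    have "v (fpow a i) = tn n 0" using down[OF assms(2) that, of i] by simp
    hence "v (fpow (fpow a i) 1) = Fn n" using step0[OF assms(2)] by simp
    moreover have "fpow a (Suc i) = fpow (fpow a i) 1" using fpow_add[of a 1 i] by simp
    ultimately show ?thesis by simp
  qed
  have T2: "v (fpow a m) = Tn n" if "i \<le> n - 1" "v a = tn n i" "i + 2 \<le> m" for i m
  proof -
    have "v (fpow (fpow a (Suc i)) 1) = Tn n" using stepF[OF val n1] F1[OF that(1,2)] by simp
    moreover have "fpow a (Suc (Suc i)) = fpow (fpow a (Suc i)) 1" using fpow_add[of a 1 "Suc i"] by simp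
    ultimately show ?thesis using shiftT[OF val n1, of a "Suc (Suc i)" m] that by simp
  qed
  have p1: "v a = Tn n \<longrightarrow> v (fpow a k) = Tn n" using allT[OF val n1] by simp
  have p2: "\<forall>i. i + 2 \<le> k \<and> v a = tn n i \<longrightarrow> v (fpow a k) = Tn n"
  proof (intro allI impI)
    fix i assume h: "i + 2 \<le> k \<and> v a = tn n i"
    then have "i \<le> n - 1" using assms by linarith
    then show "v (fpow a k) = Tn n" using T2[of i k] h by blast
  qed
  have p3: "v a = tn n (k - 1) \<longrightarrow> v (fpow a k) = Fn n"
  proof
    assume "v a = tn n (k - 1)"
    moreover have "k - 1 \<le> n - 1" "Suc (k - 1) = k" using assms by linarith+
    ultimately show "v (fpow a k) = Fn n" using F1[of "k - 1"] by metis
  qed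
  have p4: "\<forall>i. k \<le> i \<and> i \<le> n - 1 \<and> v a = tn n i \<longrightarrow> v (fpow a k) = tn n (i - k)"
  proof (intro allI impI)
    fix i assume h: "k \<le> i \<and> i \<le> n - 1 \<and> v a = tn n i"
    then show "v (fpow a k) = tn n (i - k)" using down[OF assms(2), of i a k] by blast
  qed
  have p5: "v a = Fn n \<longrightarrow> v (fpow a k) = Tn n"
  proof
    assume "v a = Fn n"
    hence "v (fpow a 1) = Tn n" using stepF[OF val n1] by simp
    thus "v (fpow a k) = Tn n" using shiftT[OF val n1, of a 1 k] assms by simp
  qed
  show ?thesis using p1 p2 p3 p4 p5 by blast
qed

end
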